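(* Let $G$ be a countable group with a right-invariant metric $d$ whose integer balls $B_k=\{g:d(g,e)\le k\}$ are finite, and suppose $(G,d)$ has the Besicovitch covering property with constant $C$. For $a\in\ell^1(G)$ and $k\in\mathbb{N}$ let $s_ka(h)=\sum_{g\in B_k}a(gh)$. Let $k\in\mathbb{N}$, $\epsilon>0$, $a,b\in\ell^1(G)$ with $b\ge0$, and set $H=\bigcup_{i=1}^kH^{(i)}$ where $H^{(i)}=\{h\in G:s_ia(h)>\epsilon\,s_ib(h)\}$. Then $\|a\|_1\ge\epsilon C^{-1}\sum_{h\in H}b(h)$.
   Context: Besicovitch covering property with constant $C$: for every finite $E$ and every collection $\mathcal{U}=\{B_{r(x)}(x):x\in E\}$ of closed balls centred in $E$ there is $\mathcal{V}\subseteq\mathcal{U}$ with $\mathbf{1}_E\le\sum_{U\in\mathcal{V}}\mathbf{1}_U\le C$. *)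

theory Defs
  imports "HOL-Analysis.Analysis" "HOL-Library.Countable"
begin

text \<open>Right-invariance of a metric on a group written additively: d(xg, yg) = d(x,y).\<close>
definition right_invariant :: "('a::group_add \<Rightarrow> 'a \<Rightarrow> real) \<Rightarrow> bool" where
  "right_invariant d \<longleftrightarrow> (\<forall>x y g. d (x + g) (y + g) = d x y)"

definition ballB :: "('a::group_add \<Rightarrow> 'a \<Rightarrow> real) \<Rightarrow> nat \<Rightarrow> 'a set" where
  "ballB d k = {g. d g 0 \<le> real k}"

definition besicovitch :: "('a \<Rightarrow> 'a \<Rightarrow> real) \<Rightarrow> real \<Rightarrow> bool" where
  "besicovitch d C \<longleftrightarrow>
     (\<forall>E r. finite E \<longrightarrow> (\<forall>x\<in>E. 0 < r x) \<longrightarrow>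
        (\<exists>V \<subseteq> (\<lambda>x. Metric_space.mcball UNIV d x (r x)) ` E.
           \<forall>y. (indicator E y :: real) \<le> (\<Sum>U\<in>V. indicator U y) \<and> (\<Sum>U\<in>V. indicator U y) \<le> C))"

definition sk :: "('a::group_add \<Rightarrow> 'a \<Rightarrow> real) \<Rightarrow> nat \<Rightarrow> ('a \<Rightarrow> real) \<Rightarrow> 'a \<Rightarrow> real" where
  "sk d k a h = (\<Sum>g\<in>ballB d k. a (g + h))"

end

theory Submission
  imports Defs
begin

lemma ball_eq:
  fixes d :: "'a::group_add \<Rightarrow> 'a \<Rightarrow> real"
  assumes "Metric_space UNIV d" "right_invariant d"
  shows "Metric_space.mcball UNIV d h (real i) = (\<lambda>g. g + h) ` ballB d i"
proof -
  have "d h y = d (y - h) 0" for y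
  proof -
    have "d h y = d y h" using Metric_space.commute[OF assms(1)] by blast
    also have "\<dots> = d (y - h + h) (0 + h)" by simp
    also have "\<dots> = d (y - h) 0" using assms(2) unfolding right_invariant_def by blast
    finally show ?thesis .
  qed
  then show ?thesis
    unfolding Metric_space.mcball_def[OF assms(1)] ballB_def
  proof (auto simp: image_iff)
    fix y assume "d (y - h) 0 \<le> real i"
    then show "\<exists>x. d x 0 \<le> real i \<and> y = x + h" by (intro exI[of _ "y - h"]) simp
  qed
qed

lemma ball_sum:
  fixes d :: "'a::group_add \<Rightarrow> 'a \<Rightarrow> real"
  assumes "Metric_space UNIV d" "right_invariant d"
  shows "sum f (Metric_space.mcball UNIV d h (real i)) = sk d i f h"
proof -
  have "inj_on (\<lambda>g. g + h) (ballB d i)" by (auto simp: inj_on_def)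
  then show ?thesis unfolding ball_eq[OF assms] sk_def
    by (simp add: sum.reindex o_def)
qed

theorem lemma6:
  fixes d :: "'a::{group_add,countable} \<Rightarrow> 'a \<Rightarrow> real"
    and C \<epsilon> :: real and k :: nat and a b :: "'a \<Rightarrow> real"
  assumes "Metric_space UNIV d"
    and "right_invariant d"
    and "\<And>n. finite (ballB d n)"
    and "besicovitch d C"
    and "\<epsilon> > 0"
    and "(\<lambda>g. \<bar>a g\<bar>) summable_on UNIV"
    and "(\<lambda>g. \<bar>b g\<bar>) summable_on UNIV"
    and "\<And>g. b g \<ge> 0"
  shows "(\<Sum>\<^sub>\<infinity>g. \<bar>a g\<bar>) \<ge>
           \<epsilon> * inverse C *
           infsum b (\<Union>i\<in>{1..k}. {h. sk d i a h > \<epsilon> * sk d i b h})"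
proof -
  interpret M: Metric_space UNIV d by fact
  define H where "H = (\<Union>i\<in>{1..k}. {h. sk d i a h > \<epsilon> * sk d i b h})"
  define A where "A = (\<Sum>\<^sub>\<infinity>g. \<bar>a g\<bar>)"
  have A0: "A \<ge> 0" unfolding A_def by (rule infsum_nonneg) simp
  define B where "B = (\<lambda>x. Metric_space.mcball UNIV d x)"
  have Bfin: "finite (B x (real i))" for x i
    unfolding B_def ball_eq[OF assms(1,2)] using assms(3) by simp
  have C1: "C \<ge> 1"
  proof -
    have "\<exists>V \<subseteq> (\<lambda>x. B x ((\<lambda>_. 1) x)) ` {undefined}.
           \<forall>y. (indicator {undefined} y :: real) \<le> (\<Sum>U\<in>V. indicator U y) \<and> (\<Sum>U\<in>V. indicator U y) \<le> C"
      using assms(4)[unfolded besicovitch_def, rule_format, of "{undefined}" "\<lambda>_. 1"]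
      unfolding B_def by simp
    then obtain V where
      cov: "\<forall>y::'a. (indicator {undefined} y :: real) \<le> (\<Sum>U\<in>V. indicator U y) \<and> (\<Sum>U\<in>V. indicator U y) \<le> C"
      by blast
    show ?thesis using cov[rule_format, of "undefined::'a"] by auto
  qed
  have key: "\<epsilon> * sum b F \<le> C * A" if F: "finite F" "F \<subseteq> H" for F
  proof -
    define i where "i = (\<lambda>h. SOME i. i \<in> {1..k} \<and> sk d i a h > \<epsilon> * sk d i b h)"
    have i: "i h \<in> {1..k} \<and> sk d (i h) a h > \<epsilon> * sk d (i h) b h" if "h \<in> F" for h
      unfolding i_def by (rule someI_ex) (use that F in \<open>force simp: H_def\<close>)
    obtain V where V: "V \<subseteq> (\<lambda>x. B x (real (i x))) ` F"
      and cov: "\<And>y. (indicator F y :: real) \<le> (\<Sum>U\<in>V. indicator U y)"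
      and covC: "\<And>y. (\<Sum>U\<in>V. indicator U y) \<le> C"
    proof -
      have pos: "\<forall>x\<in>F. 0 < real (i x)" using i by fastforce
      have "\<exists>V \<subseteq> (\<lambda>x. B x ((\<lambda>x. real (i x)) x)) ` F.
           \<forall>y. (indicator F y :: real) \<le> (\<Sum>U\<in>V. indicator U y) \<and> (\<Sum>U\<in>V. indicator U y) \<le> C"
        using assms(4)[unfolded besicovitch_def, rule_format, of F "\<lambda>x. real (i x)"]
          F(1) pos unfolding B_def by simp
      then show ?thesis using that by blast
    qed
    have Vfin: "finite V" using V F(1) finite_surj by blast
    define W where "W = \<Union>V"
    have Wfin: "finite W" unfolding W_def using Vfin V Bfin by auto
    define S where "S = (\<lambda>y. (\<Sum>U\<in>V. indicator U y :: real))"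
    have FW: "F \<subseteq> W"
    proof
      fix y assume "y \<in> F"
      then have "1 \<le> S y" using cov[of y] by (simp add: S_def)
      have "\<exists>U\<in>V. y \<in> U"
      proof (rule ccontr)
        assume "\<not> ?thesis"
        then have "S y = 0" unfolding S_def by (intro sum.neutral) auto
        with \<open>1 \<le> S y\<close> show False by simp
      qed
      then show "y \<in> W" by (auto simp: W_def)
    qed
    have swap: "(\<Sum>y\<in>W. f y * S y) = (\<Sum>U\<in>V. sum f U)" for f :: "'a \<Rightarrow> real"
    proof -
      have "(\<Sum>y\<in>W. f y * S y) = (\<Sum>U\<in>V. \<Sum>y\<in>W. f y * indicator U y)"
        unfolding S_def by (simp add: sum_distrib_left sum.swap[of _ W V])
      also have "\<dots> = (\<Sum>U\<in>V. sum f U)"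
      proof (rule sum.cong[OF refl])
        fix U assume "U \<in> V"
        then have "U \<subseteq> W" by (auto simp: W_def)
        then show "(\<Sum>y\<in>W. f y * indicator U y) = sum f U"
          by (rule sum.mono_neutral_cong_right[OF Wfin]) (auto simp: indicator_def)
      qed
      finally show ?thesis .
    qed
    have "sum b F \<le> (\<Sum>y\<in>F. b y * S y)"
    proof (rule sum_mono)
      fix y assume "y \<in> F"
      then have "1 \<le> S y" using cov[of y] by (simp add: S_def)
      then show "b y \<le> b y * S y" using assms(8)[of y] by (simp add: mult_le_cancel_left1)
    qed
    also have "\<dots> \<le> (\<Sum>y\<in>W. b y * S y)"
      by (rule sum_mono2[OF Wfin FW]) (use assms(8) in \<open>auto simp: S_def intro!: sum_nonneg mult_nonneg_nonneg\<close>)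
    also have "\<dots> = (\<Sum>U\<in>V. sum b U)" by (rule swap)
    finally have 1: "\<epsilon> * sum b F \<le> \<epsilon> * (\<Sum>U\<in>V. sum b U)"
      using assms(5) by (simp add: mult_left_mono)
    also have "\<dots> = (\<Sum>U\<in>V. \<epsilon> * sum b U)" by (rule sum_distrib_left)
    also have "\<dots> \<le> (\<Sum>U\<in>V. sum a U)"
    proof (rule sum_mono)
      fix U assume "U \<in> V"
      then obtain x where x: "x \<in> F" "U = B x (real (i x))" using V by auto
      show "\<epsilon> * sum b U \<le> sum a U"
        using i[OF x(1)] unfolding x(2) B_def ball_sum[OF assms(1,2)] by simp
    qed
    also have "\<dots> \<le> (\<Sum>U\<in>V. sum (\<lambda>y. \<bar>a y\<bar>) U)"
      by (intro sum_mono) auto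
    also have "\<dots> = (\<Sum>y\<in>W. \<bar>a y\<bar> * S y)" by (rule swap[symmetric])
    also have "\<dots> \<le> (\<Sum>y\<in>W. \<bar>a y\<bar> * C)"
      by (intro sum_mono mult_left_mono) (auto simp: S_def covC)
    also have "\<dots> = C * (\<Sum>y\<in>W. \<bar>a y\<bar>)" by (simp add: sum_distrib_left mult.commute)
    also have "\<dots> \<le> C * A"
      unfolding A_def using C1
      by (intro mult_left_mono finite_sum_le_infsum[OF assms(6) Wfin]) auto
    finally show ?thesis .
  qed
  have bs: "b summable_on H"
    using summable_on_subset[OF assms(7), of H] assms(8) by (simp add: abs_of_nonneg)
  have "infsum b H \<le> C * A / \<epsilon>"
    by (rule infsum_le_finite_sums[OF bs]) (use key assms(5) in \<open>auto simp: field_simps\<close>)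
  then have "\<epsilon> * infsum b H \<le> C * A" using assms(5) by (simp add: field_simps)
  then have "\<epsilon> * inverse C * infsum b H \<le> A" using C1 by (simp add: field_simps)
  then show ?thesis unfolding A_def H_def .
qed

end
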